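(* Let $S$ be a finite set, $R$ a commutative ring with $1$, $q\in R$, and $\mathfrak M\subseteq 2^S$ an arbitrary set system. Then the ideal $I_q(\mathfrak M)$ of $A=R\langle t_s\mid s\in S\rangle$, and hence the algebra $D_q(\mathfrak M)=A/I_q(\mathfrak M)$, does not depend on the choice of the total order on $S$ used to define it.
   Context: Given a total order $<$ on $S$: for $J=\{j_1<\dots<j_{\#J}\}\subseteq S$, $t_J=t_{j_1}\cdots t_{j_{\#J}}$; for $I=\{j_{\alpha_1}<\dots<j_{\alpha_{\#I}}\}\subseteq J$, $\ell_J(I)=\sum_{\nu}(\alpha_\nu-\nu)$; $\tau^-_J=\sum_{I\subseteq J,\ \#I\text{ odd}}(-1)^{\ell_J(I)}(-q)^{(\#I-1)/2}t_{J\setminus I}$. $I_q(\mathfrak M)$ is the two-sided ideal of $A$ generated by $t_s^2-q$ ($s\in S$), $t_rt_s+t_st_r-2q$ ($r,s\in S$, $s<r$), and $\tau^-_J$ ($J\in\mathfrak M$); all of $t_J$, $\ell_J$, $\tau^-_J$ depend on the order. *)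

theory Defs
  imports Main "HOL-Library.Function_Algebras"
begin

text \<open>The free associative algebra \<open>A = R<t_s | s in S>\<close>: elements are finitely supported
  functions from words over \<open>S\<close> (lists) to \<open>R\<close>; the word \<open>[s1,...,sk]\<close> stands for the
  monomial \<open>t_s1 ... t_sk\<close>.\<close>

definition ncA :: "'s set \<Rightarrow> ('s list \<Rightarrow> 'r::comm_ring_1) set" where
  "ncA S = {f. finite {w. f w \<noteq> 0} \<and> (\<forall>w. f w \<noteq> 0 \<longrightarrow> set w \<subseteq> S)}"

definition ncmono :: "'s list \<Rightarrow> 's list \<Rightarrow> 'r::comm_ring_1" where
  "ncmono w = (\<lambda>u. if u = w then 1 else 0)"

definition ncconst :: "'r::comm_ring_1 \<Rightarrow> 's list \<Rightarrow> 'r" where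
  "ncconst c = (\<lambda>u. if u = [] then c else 0)"

definition ncsmult :: "'r::comm_ring_1 \<Rightarrow> ('s list \<Rightarrow> 'r) \<Rightarrow> 's list \<Rightarrow> 'r" where
  "ncsmult c f = (\<lambda>u. c * f u)"

definition ncmult :: "('s list \<Rightarrow> 'r::comm_ring_1) \<Rightarrow> ('s list \<Rightarrow> 'r) \<Rightarrow> 's list \<Rightarrow> 'r" where
  "ncmult f g = (\<lambda>w. \<Sum>i\<le>length w. f (take i w) * g (drop i w))"

inductive_set nc_ideal :: "'s set \<Rightarrow> ('s list \<Rightarrow> 'r::comm_ring_1) set \<Rightarrow> ('s list \<Rightarrow> 'r) set"
  for S :: "'s set" and G :: "('s list \<Rightarrow> 'r) set" where
  gen: "g \<in> G \<Longrightarrow> g \<in> nc_ideal S G"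
| zero: "0 \<in> nc_ideal S G"
| add: "f \<in> nc_ideal S G \<Longrightarrow> g \<in> nc_ideal S G \<Longrightarrow> f + g \<in> nc_ideal S G"
| mult_left: "a \<in> ncA S \<Longrightarrow> f \<in> nc_ideal S G \<Longrightarrow> ncmult a f \<in> nc_ideal S G"
| mult_right: "a \<in> ncA S \<Longrightarrow> f \<in> nc_ideal S G \<Longrightarrow> ncmult f a \<in> nc_ideal S G"

definition ord_less :: "('s \<times> 's) set \<Rightarrow> 's \<Rightarrow> 's \<Rightarrow> bool" where
  "ord_less ord a b \<longleftrightarrow> (a, b) \<in> ord \<and> a \<noteq> b"

definition ordlist :: "('s \<times> 's) set \<Rightarrow> 's set \<Rightarrow> 's list" where
  "ordlist ord J = (THE xs. set xs = J \<and> sorted_wrt (ord_less ord) xs)"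

definition tJ :: "('s \<times> 's) set \<Rightarrow> 's set \<Rightarrow> 's list \<Rightarrow> 'r::comm_ring_1" where
  "tJ ord J = ncmono (ordlist ord J)"

text \<open>0-based position of an element in a list.\<close>
definition pos :: "'s list \<Rightarrow> 's \<Rightarrow> nat" where
  "pos xs a = length (takeWhile (\<lambda>x. x \<noteq> a) xs)"

text \<open>\<open>l_J(I) = sum_nu (alpha_nu - nu)\<close>, where \<open>I = {j_alpha_1 < ... < j_alpha_#I}\<close>
  (computed with 0-based indices, which gives the same differences).\<close>
definition ellJ :: "('s \<times> 's) set \<Rightarrow> 's set \<Rightarrow> 's set \<Rightarrow> nat" where
  "ellJ ord J I = (let js = ordlist ord J; is = ordlist ord I in
      \<Sum>\<nu><length is. pos js (is ! \<nu>) - \<nu>)"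

definition tau_minus :: "('s \<times> 's) set \<Rightarrow> 'r::comm_ring_1 \<Rightarrow> 's set \<Rightarrow> 's list \<Rightarrow> 'r" where
  "tau_minus ord q J = (\<Sum>I\<in>{I. I \<subseteq> J \<and> odd (card I)}.
      ncsmult ((-1) ^ ellJ ord J I * (- q) ^ ((card I - 1) div 2)) (tJ ord (J - I)))"

definition Iq_gens :: "'s set \<Rightarrow> ('s \<times> 's) set \<Rightarrow> 'r::comm_ring_1 \<Rightarrow> 's set set \<Rightarrow> ('s list \<Rightarrow> 'r) set" where
  "Iq_gens S ord q M =
     {ncmono [s, s] - ncconst q | s. s \<in> S}
   \<union> {ncmono [r, s] + ncmono [s, r] - ncconst (2 * q) | r s. r \<in> S \<and> s \<in> S \<and> ord_less ord s r}
   \<union> {tau_minus ord q J | J. J \<in> M}"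

definition Iq :: "'s set \<Rightarrow> ('s \<times> 's) set \<Rightarrow> 'r::comm_ring_1 \<Rightarrow> 's set set \<Rightarrow> ('s list \<Rightarrow> 'r) set" where
  "Iq S ord q M = nc_ideal S (Iq_gens S ord q M)"

end

theory Submission
  imports Defs
begin

lemma ncmult_add_left: "ncmult (f + g) h = ncmult f h + ncmult g h"
  by (rule ext) (simp add: ncmult_def sum.distrib algebra_simps)
lemma ncmult_add_right: "ncmult f (g + h) = ncmult f g + ncmult f h"
  by (rule ext) (simp add: ncmult_def sum.distrib algebra_simps)
lemma ncmult_diff_left: "ncmult (f - g) h = ncmult f h - ncmult g h"
  by (rule ext) (simp add: ncmult_def sum_subtractf algebra_simps)
lemma ncmult_diff_right: "ncmult f (g - h) = ncmult f g - ncmult f h"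
  by (rule ext) (simp add: ncmult_def sum_subtractf algebra_simps)
lemma ncmult_smult_left: "ncmult (ncsmult c f) h = ncsmult c (ncmult f h)"
  by (rule ext) (simp add: ncmult_def ncsmult_def sum_distrib_left algebra_simps)
lemma ncmult_smult_right: "ncmult f (ncsmult c h) = ncsmult c (ncmult f h)"
  by (rule ext) (simp add: ncmult_def ncsmult_def sum_distrib_left algebra_simps)
lemma ncsmult_add: "ncsmult c (f + g) = ncsmult c f + ncsmult c g"
  by (rule ext) (simp add: ncsmult_def algebra_simps)
lemma ncsmult_diff: "ncsmult c (f - g) = ncsmult c f - ncsmult c g"
  by (rule ext) (simp add: ncsmult_def algebra_simps)
lemma ncsmult_smult: "ncsmult c (ncsmult d f) = ncsmult (c * d) f"
  by (rule ext) (simp add: ncsmult_def algebra_simps)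
lemma ncconst_eq: "ncconst c = ncsmult c (ncmono [])"
  by (rule ext) (simp add: ncsmult_def ncconst_def ncmono_def)

lemma ncmult_mono: "ncmult (ncmono u) (ncmono v) = (ncmono (u @ v) :: 's list \<Rightarrow> 'r::comm_ring_1)"
proof (rule ext)
  fix w :: "'s list"
  have eq: "(take i w = u \<and> drop i w = v) \<longleftrightarrow> (w = u @ v \<and> i = length u)"
    if "i \<le> length w" for i
    using that by (metis append_eq_conv_conj append_take_drop_id length_take min_absorb2)
  have "ncmult (ncmono u) (ncmono v) w
      = (\<Sum>i\<le>length w. if w = u @ v \<and> i = length u then 1 else 0)"
    unfolding ncmult_def ncmono_def
    by (rule sum.cong) (auto simp: eq)
  also have "\<dots> = ncmono (u @ v) w"
    by (auto simp: ncmono_def)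
  finally show "ncmult (ncmono u) (ncmono v) w = ncmono (u @ v) w" .
qed

lemma ncmult_const: "ncmult (ncconst c) f = (ncsmult c f :: 's list \<Rightarrow> 'r::comm_ring_1)"
proof (rule ext)
  fix w :: "'s list"
  have "ncmult (ncconst c) f w = (\<Sum>i\<in>{0}. ncconst c (take i w) * f (drop i w))"
    unfolding ncmult_def
    by (rule sum.mono_neutral_right) (auto simp: ncconst_def)
  then show "ncmult (ncconst c) f w = ncsmult c f w" by (simp add: ncconst_def ncsmult_def)
qed

lemma ncmono_A: "set u \<subseteq> S \<Longrightarrow> ncmono u \<in> ncA S"
  by (auto simp: ncA_def ncmono_def)
lemma ncconst_A: "ncconst c \<in> ncA S"
  by (auto simp: ncA_def ncconst_def)

lemma ideal_smult: "f \<in> nc_ideal S G \<Longrightarrow> ncsmult c f \<in> nc_ideal S G"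
  by (metis ncmult_const ncconst_A nc_ideal.mult_left)
lemma ideal_neg: "f \<in> nc_ideal S G \<Longrightarrow> - f \<in> nc_ideal S G"
proof -
  assume "f \<in> nc_ideal S G"
  then have "ncsmult (-1) f \<in> nc_ideal S G" by (rule ideal_smult)
  moreover have "ncsmult (-1) f = - f" by (rule ext) (simp add: ncsmult_def)
  ultimately show ?thesis by simp
qed
lemma ideal_diff: "f \<in> nc_ideal S G \<Longrightarrow> g \<in> nc_ideal S G \<Longrightarrow> f - g \<in> nc_ideal S G"
  by (metis diff_conv_add_uminus ideal_neg nc_ideal.add)
lemma ideal_sum: "finite A \<Longrightarrow> (\<And>x. x \<in> A \<Longrightarrow> h x \<in> nc_ideal S G) \<Longrightarrow> sum h A \<in> nc_ideal S G"
  by (induction A rule: finite_induct) (auto intro: nc_ideal.zero nc_ideal.add)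

lemma ideal_Q:
  assumes "ncmono [a,b] + ncmono [b,a] - ncconst (2*q) \<in> G" "set u \<subseteq> S" "set v \<subseteq> S"
  shows "ncsmult c (ncmono (u @ [a,b] @ v) + ncmono (u @ [b,a] @ v) - ncsmult (2*q) (ncmono (u @ v))) \<in> nc_ideal S G"
proof -
  let ?g = "ncmono [a,b] + ncmono [b,a] - ncconst (2*q)"
  have "ncmult (ncmono u) (ncmult ?g (ncmono v)) \<in> nc_ideal S G"
    by (intro nc_ideal.mult_left nc_ideal.mult_right nc_ideal.gen ncmono_A assms)
  moreover have "ncmult (ncmono u) (ncmult ?g (ncmono v)) =
      ncmono (u @ [a,b] @ v) + ncmono (u @ [b,a] @ v) - ncsmult (2*q) (ncmono (u @ v))"
    by (simp add: ncmult_add_left ncmult_add_right ncmult_diff_left ncmult_diff_right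
        ncconst_eq ncmult_smult_left ncmult_smult_right ncmult_mono)
  ultimately show ?thesis by (metis ideal_smult)
qed


fun inv :: "'s list \<Rightarrow> 's set \<Rightarrow> nat" where
  "inv [] I = 0"
| "inv (x # xs) I = (if x \<in> I then 0 else length (filter (\<lambda>y. y \<in> I) xs)) + inv xs I"

lemma inv_append: "inv (us @ zs) I = inv us I + inv zs I
   + length (filter (\<lambda>x. x \<notin> I) us) * length (filter (\<lambda>x. x \<in> I) zs)"
  by (induction us) auto

lemma inv_cong: "(\<And>x. x \<in> set xs \<Longrightarrow> x \<in> I \<longleftrightarrow> x \<in> I') \<Longrightarrow> inv xs I = inv xs I'"
proof (induction xs)
  case (Cons x xs)
  have "filter (\<lambda>y. y \<in> I) xs = filter (\<lambda>y. y \<in> I') xs"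
    using Cons.prems by (intro filter_cong) auto
  then show ?case using Cons by auto
qed simp

definition ell' :: "'s list \<Rightarrow> 's set \<Rightarrow> nat" where
  "ell' xs I = (\<Sum>\<nu><length (filter (\<lambda>x. x \<in> I) xs). pos xs (filter (\<lambda>x. x \<in> I) xs ! \<nu>) - \<nu>)"

lemma pos_Cons: "pos (x # xs) a = (if x = a then 0 else Suc (pos xs a))"
  by (simp add: pos_def)

lemma pos_ge: "distinct xs \<Longrightarrow> \<nu> < length (filter P xs) \<Longrightarrow> \<nu> \<le> pos xs (filter P xs ! \<nu>)"
proof (induction xs arbitrary: \<nu>)
  case (Cons x xs)
  show ?case
  proof (cases "P x")
    case True
    show ?thesis
    proof (cases \<nu>)
      case (Suc m)
      have "filter P xs ! m \<in> set (filter P xs)" using Cons.prems Suc True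
        by (intro nth_mem) auto
      then have "filter P xs ! m \<in> set xs" by simp
      then have "filter P xs ! m \<noteq> x" using Cons.prems by auto
      then show ?thesis using Cons Suc True by (auto simp: pos_Cons)
    qed simp
  next
    case False
    have "filter P xs ! \<nu> \<in> set (filter P xs)" using Cons.prems False by (intro nth_mem) simp
    then have "filter P xs ! \<nu> \<noteq> x" using False by auto
    moreover have "\<nu> \<le> pos xs (filter P xs ! \<nu>)" using Cons False by simp
    ultimately show ?thesis using False by (simp add: pos_Cons)
  qed
qed simp

lemma ell'_inv: "distinct xs \<Longrightarrow> ell' xs I = inv xs I"
proof (induction xs)
  case Nil then show ?case by (simp add: ell'_def)
next
  case (Cons x xs)
  let ?fs = "filter (\<lambda>x. x \<in> I) xs"
  have ne: "?fs ! \<nu> \<noteq> x" if "\<nu> < length ?fs" for \<nu>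
  proof -
    have "?fs ! \<nu> \<in> set xs" using nth_mem[OF that] by auto
    then show ?thesis using Cons.prems by auto
  qed
  have pc: "pos (x # xs) (?fs ! \<nu>) = Suc (pos xs (?fs ! \<nu>))" if "\<nu> < length ?fs" for \<nu>
    using ne[OF that] by (simp add: pos_Cons)
  show ?case
  proof (cases "x \<in> I")
    case True
    have "ell' (x # xs) I = (\<Sum>\<nu><Suc (length ?fs). pos (x # xs) ((x # ?fs) ! \<nu>) - \<nu>)"
      using True by (simp add: ell'_def)
    also have "\<dots> = (\<Sum>\<nu><length ?fs. pos (x # xs) (?fs ! \<nu>) - Suc \<nu>)"
      by (subst sum.lessThan_Suc_shift) (simp add: pos_Cons)
    also have "\<dots> = (\<Sum>\<nu><length ?fs. pos xs (?fs ! \<nu>) - \<nu>)"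
      by (rule sum.cong) (auto simp: pc)
    finally show ?thesis using True Cons by (simp add: ell'_def)
  next
    case False
    have "ell' (x # xs) I = (\<Sum>\<nu><length ?fs. pos (x # xs) (?fs ! \<nu>) - \<nu>)"
      using False by (simp add: ell'_def)
    also have "\<dots> = (\<Sum>\<nu><length ?fs. 1 + (pos xs (?fs ! \<nu>) - \<nu>))"
    proof (intro sum.cong refl)
      fix \<nu> assume "\<nu> \<in> {..<length ?fs}"
      then have h: "\<nu> < length ?fs" by simp
      have "\<nu> \<le> pos xs (?fs ! \<nu>)" using pos_ge[OF _ h] Cons.prems by simp
      then show "pos (x # xs) (?fs ! \<nu>) - \<nu> = 1 + (pos xs (?fs ! \<nu>) - \<nu>)"
        using pc[OF h] by simp
    qed
    also have "\<dots> = length ?fs + ell' xs I"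
      unfolding ell'_def sum.distrib by simp
    finally show ?thesis using False Cons by simp
  qed
qed


definition cf :: "'r::comm_ring_1 \<Rightarrow> 's list \<Rightarrow> 's set \<Rightarrow> 'r" where
  "cf q xs I = (-1) ^ inv xs I * (- q) ^ ((card I - 1) div 2)"

definition tauL :: "'r::comm_ring_1 \<Rightarrow> 's list \<Rightarrow> 's list \<Rightarrow> 'r" where
  "tauL q xs = (\<Sum>I\<in>{I. I \<subseteq> set xs \<and> odd (card I)}.
      ncsmult (cf q xs I) (ncmono (filter (\<lambda>x. x \<notin> I) xs)))"

lemma filter_ins: "a \<notin> set us \<Longrightarrow> b \<notin> set us \<Longrightarrow>
   filter (\<lambda>x. x \<notin> insert a (insert b I)) us = filter (\<lambda>x. x \<notin> I) us"
  by (induction us) auto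
lemma filter_ins': "a \<notin> set us \<Longrightarrow> b \<notin> set us \<Longrightarrow>
   filter (\<lambda>x. x \<in> insert a (insert b I)) us = filter (\<lambda>x. x \<in> I) us"
  by (induction us) auto

lemma filter_ins2: "a \<notin> set us \<Longrightarrow> b \<notin> set us \<Longrightarrow>
   filter (\<lambda>x. x \<noteq> a \<and> x \<noteq> b \<and> x \<notin> I) us = filter (\<lambda>x. x \<notin> I) us"
  by (induction us) auto
lemma filter_ins2': "a \<notin> set us \<Longrightarrow> b \<notin> set us \<Longrightarrow>
   filter (\<lambda>x. x = a \<or> x = b \<or> x \<in> I) us = filter (\<lambda>x. x \<in> I) us"
  by (induction us) auto

lemma neg1_pow_eq: "m + 2 * k = m' + 2 * l \<Longrightarrow> (-1::'r::comm_ring_1) ^ m = (-1) ^ m'"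
proof -
  assume h: "m + 2 * k = m' + 2 * l"
  have "(-1::'r) ^ m = (-1) ^ (m + 2 * k)" by (simp add: power_add power_mult)
  also have "\<dots> = (-1) ^ (m' + 2 * l)" using h by simp
  also have "\<dots> = (-1) ^ m'" by (simp add: power_add power_mult)
  finally show ?thesis .
qed

lemma tau_swap:
  fixes q :: "'r::comm_ring_1" and us vs :: "'s list"
  assumes dist: "distinct (us @ a # b # vs)" and S: "set (us @ a # b # vs) \<subseteq> S"
    and G: "ncmono [a,b] + ncmono [b,a] - ncconst (2*q) \<in> G"
  shows "tauL q (us @ a # b # vs) + tauL q (us @ b # a # vs) \<in> nc_ideal S G"
proof -
  define xs where "xs = us @ a # b # vs"
  define ys where "ys = us @ b # a # vs"
  have setys: "set ys = set xs" by (auto simp: xs_def ys_def)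
  define \<I> where "\<I> = {I. I \<subseteq> set xs \<and> odd (card I)}"
  have finI: "finite \<I>" unfolding \<I>_def by (rule finite_subset[of _ "Pow (set xs)"]) auto
  define T where "T = (\<lambda>zs I. ncsmult (cf q zs I) (ncmono (filter (\<lambda>x. x \<notin> I) zs)) :: 's list \<Rightarrow> 'r)"
  define F where "F = (\<lambda>I. T xs I + T ys I)"
  have sum_eq: "tauL q xs + tauL q ys = sum F \<I>"
    unfolding tauL_def F_def T_def \<I>_def setys by (simp add: sum.distrib)
  have ab: "a \<noteq> b" "a \<notin> set us" "b \<notin> set us" "a \<notin> set vs" "b \<notin> set vs"
    using dist by auto
  define E where "E = {I\<in>\<I>. (a \<in> I) = (b \<in> I)}"
  have EI: "E \<subseteq> \<I>" by (auto simp: E_def)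
  have D0: "F I = 0" if "I \<in> \<I> - E" for I
  proof -
    have fe: "filter (\<lambda>x. x \<notin> I) xs = filter (\<lambda>x. x \<notin> I) ys"
      using that by (auto simp: E_def xs_def ys_def)
    have "cf q ys I = - cf q xs I"
    proof (cases "a \<in> I")
      case True
      then have "b \<notin> I" using that by (auto simp: E_def)
      then have "inv ys I = Suc (inv xs I)" using True ab
        by (simp add: xs_def ys_def inv_append)
      then show ?thesis by (simp add: cf_def)
    next
      case False
      then have "b \<in> I" using that by (auto simp: E_def)
      then have "inv xs I = Suc (inv ys I)" using False ab
        by (simp add: xs_def ys_def inv_append)
      then show ?thesis by (simp add: cf_def)
    qed
    then show ?thesis unfolding F_def T_def fe
      by (intro ext) (simp add: ncsmult_def)
  qed
  define N where "N = {I\<in>\<I>. a \<notin> I \<and> b \<notin> I}"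
  define ins where "ins = (\<lambda>I. insert a (insert b I))"
  have finN: "finite N" using finI by (auto simp: N_def)
  have ENAB: "E = N \<union> ins ` N"
  proof (rule set_eqI, rule iffI)
    fix I assume "I \<in> E"
    then have I: "I \<subseteq> set xs" "odd (card I)" "(a \<in> I) = (b \<in> I)" by (auto simp: E_def \<I>_def)
    show "I \<in> N \<union> ins ` N"
    proof (cases "a \<in> I")
      case True
      let ?J = "I - {a, b}"
      have finI: "finite I" using I(1) finite_subset by blast
      have sub: "{a, b} \<subseteq> I" using True I(3) by auto
      have c2: "card {a, b} = 2" using ab(1) by simp
      have "card {a, b} \<le> card I" by (rule card_mono[OF finI sub])
      moreover have "card ?J = card I - card {a, b}" by (rule card_Diff_subset[OF _ sub]) simp
      ultimately have "card I = card ?J + 2" using c2 by linarith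
      then have "?J \<in> N" using I by (auto simp: N_def \<I>_def)
      moreover have "I = ins ?J" using True I(3) by (auto simp: ins_def)
      ultimately show ?thesis by blast
    next
      case False
      then show ?thesis using I by (auto simp: N_def \<I>_def)
    qed
  next
    fix I assume "I \<in> N \<union> ins ` N"
    then show "I \<in> E"
    proof
      assume "I \<in> N" then show ?thesis by (auto simp: N_def E_def)
    next
      assume "I \<in> ins ` N"
      then obtain J where J: "J \<in> N" "I = ins J" by blast
      have finJ: "finite J" using J(1) finite_subset[of J "set xs"] by (auto simp: N_def \<I>_def)
      have "card I = card J + 2" using J ab(1) finJ by (auto simp: ins_def N_def)
      then show ?thesis using J ab by (auto simp: E_def \<I>_def N_def ins_def xs_def)
    qed
  qed
  have injN: "inj_on ins N"
  proof (rule inj_onI)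
    fix I J assume h: "I \<in> N" "J \<in> N" "ins I = ins J"
    then have "ins I - {a, b} = ins J - {a, b}" by simp
    moreover have "ins I - {a, b} = I" using h(1) by (auto simp: ins_def N_def)
    moreover have "ins J - {a, b} = J" using h(2) by (auto simp: ins_def N_def)
    ultimately show "I = J" by simp
  qed
  have disj: "N \<inter> ins ` N = {}" by (auto simp: N_def ins_def)
  have "sum F \<I> = sum F (\<I> - E) + sum F E"
    using sum.subset_diff[OF EI finI] .
  also have "sum F (\<I> - E) = 0" using D0 by simp
  also have "sum F E = sum F N + sum (F \<circ> ins) N"
    unfolding ENAB using finN disj injN
    by (simp add: sum.union_disjoint sum.reindex)
  also have "\<dots> = (\<Sum>I\<in>N. F I + F (ins I))" by (simp add: sum.distrib)
  finally have main: "tauL q xs + tauL q ys = (\<Sum>I\<in>N. F I + F (ins I))" using sum_eq by simp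
  have "(\<Sum>I\<in>N. F I + F (ins I)) \<in> nc_ideal S G"
  proof (rule ideal_sum[OF finN])
    fix I assume IN: "I \<in> N"
    then have I: "I \<subseteq> set xs" "odd (card I)" "a \<notin> I" "b \<notin> I" by (auto simp: N_def \<I>_def)
    have finI: "finite I" using I(1) finite_subset by blast
    define u' where "u' = filter (\<lambda>x. x \<notin> I) us"
    define v' where "v' = filter (\<lambda>x. x \<notin> I) vs"
    have f1: "filter (\<lambda>x. x \<notin> I) xs = u' @ [a, b] @ v'" using I by (simp add: xs_def u'_def v'_def)
    have f2: "filter (\<lambda>x. x \<notin> I) ys = u' @ [b, a] @ v'" using I by (simp add: ys_def u'_def v'_def)
    have f3: "filter (\<lambda>x. x \<notin> ins I) xs = u' @ v'"
      using ab by (simp add: xs_def u'_def v'_def ins_def filter_ins filter_ins2)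
    have f4: "filter (\<lambda>x. x \<notin> ins I) ys = u' @ v'"
      using ab by (simp add: ys_def u'_def v'_def ins_def filter_ins filter_ins2)
    have i1: "inv ys I = inv xs I" using I by (simp add: xs_def ys_def inv_append)
    have i2: "inv ys (ins I) = inv xs (ins I)" using I by (simp add: xs_def ys_def inv_append ins_def)
    have iu: "inv us (ins I) = inv us I" using ab by (intro inv_cong) (auto simp: ins_def)
    have iv: "inv vs (ins I) = inv vs I" using ab by (intro inv_cong) (auto simp: ins_def)
    have i3: "inv xs I + 2 * length (filter (\<lambda>x. x \<notin> I) us)
        = inv xs (ins I) + 2 * length (filter (\<lambda>x. x \<in> I) vs)"
      using I ab iu iv
      by (simp add: xs_def inv_append ins_def filter_ins filter_ins' filter_ins2 filter_ins2' algebra_simps)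
    have c3: "card (ins I) = card I + 2" using I finI ab by (simp add: ins_def)
    have cpos: "card I \<ge> 1" using I(2) by (cases "card I") auto
    have k: "(card (ins I) - 1) div 2 = Suc ((card I - 1) div 2)" using c3 cpos by simp
    have cf1: "cf q ys I = cf q xs I" by (simp add: cf_def i1)
    have cf2: "cf q ys (ins I) = - q * cf q xs I" "cf q xs (ins I) = - q * cf q xs I"
      unfolding cf_def i2 k using neg1_pow_eq[OF i3, where 'r='r] by (simp_all add: algebra_simps)
    have "F I + F (ins I) = ncsmult (cf q xs I)
        (ncmono (u' @ [a,b] @ v') + ncmono (u' @ [b,a] @ v') - ncsmult (2*q) (ncmono (u' @ v')))"
      unfolding F_def T_def f1 f2 f3 f4 cf1 cf2
      by (intro ext) (simp add: ncsmult_def algebra_simps)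
    moreover have "set u' \<subseteq> S" "set v' \<subseteq> S" using S by (auto simp: u'_def v'_def)
    ultimately show "F I + F (ins I) \<in> nc_ideal S G" using ideal_Q[OF G] by simp
  qed
  then show ?thesis using main by (simp add: xs_def ys_def)
qed


definition Rel :: "'s set \<Rightarrow> ('s list \<Rightarrow> 'r::comm_ring_1) set \<Rightarrow> 'r \<Rightarrow> 's list \<Rightarrow> 's list \<Rightarrow> bool" where
  "Rel S G q xs ys \<longleftrightarrow> tauL q xs - tauL q ys \<in> nc_ideal S G \<or> tauL q xs + tauL q ys \<in> nc_ideal S G"

lemma Rel_refl: "Rel S G q xs xs"
  by (simp add: Rel_def nc_ideal.zero)

lemma Rel_trans: assumes "Rel S G q xs ys" "Rel S G q ys zs" shows "Rel S G q xs zs"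
proof -
  let ?x = "tauL q xs" and ?y = "tauL q ys" and ?z = "tauL q zs"
  have e1: "?x - ?z = (?x - ?y) + (?y - ?z)" by simp
  have e2: "?x + ?z = (?x - ?y) + (?y + ?z)" by simp
  have e3: "?x + ?z = (?x + ?y) - (?y - ?z)" by simp
  have e4: "?x - ?z = (?x + ?y) - (?y + ?z)" by simp
  from assms show ?thesis unfolding Rel_def
    by (metis e1 e2 e3 e4 nc_ideal.add ideal_diff)
qed

locale QG =
  fixes S :: "'s set" and G :: "('s list \<Rightarrow> 'r::comm_ring_1) set" and q :: 'r
  assumes QG: "\<And>a b. a \<in> S \<Longrightarrow> b \<in> S \<Longrightarrow> a \<noteq> b \<Longrightarrow> ncmono [a,b] + ncmono [b,a] - ncconst (2*q) \<in> G"
begin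

lemma Rel_swap:
  assumes "distinct (us @ a # b # vs)" "set (us @ a # b # vs) \<subseteq> S"
  shows "Rel S G q (us @ a # b # vs) (us @ b # a # vs)"
  using tau_swap[OF assms QG] assms unfolding Rel_def by auto

lemma Rel_bubble:
  "distinct (us @ ws @ x # vs) \<Longrightarrow> set (us @ ws @ x # vs) \<subseteq> S \<Longrightarrow>
   Rel S G q (us @ ws @ x # vs) (us @ x # ws @ vs)"
proof (induction ws arbitrary: us)
  case Nil then show ?case by (simp add: Rel_refl)
next
  case (Cons w ws)
  have 1: "Rel S G q ((us @ [w]) @ ws @ x # vs) ((us @ [w]) @ x # ws @ vs)"
    using Cons by (intro Cons.IH) auto
  have 2: "Rel S G q (us @ w # x # (ws @ vs)) (us @ x # w # (ws @ vs))"
    using Cons.prems by (intro Rel_swap) auto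
  show ?case using Rel_trans[OF 1[simplified] 2] by simp
qed

lemma Rel_perm:
  "distinct (us @ zs) \<Longrightarrow> distinct zs' \<Longrightarrow> set zs' = set zs \<Longrightarrow> set (us @ zs) \<subseteq> S \<Longrightarrow>
   Rel S G q (us @ zs') (us @ zs)"
proof (induction zs arbitrary: us zs')
  case Nil then show ?case by (simp add: Rel_refl)
next
  case (Cons x zs)
  have "x \<in> set zs'" using Cons.prems by simp
  then obtain ws1 ws2 where zs': "zs' = ws1 @ x # ws2" by (meson split_list)
  have d: "distinct (us @ ws1 @ x # ws2)" using Cons.prems zs' by auto
  have 1: "Rel S G q (us @ ws1 @ x # ws2) (us @ x # ws1 @ ws2)"
    using Cons.prems zs' d by (intro Rel_bubble) auto
  have sets: "set (ws1 @ ws2) = set zs" using Cons.prems zs' by auto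
  have 2: "Rel S G q ((us @ [x]) @ (ws1 @ ws2)) ((us @ [x]) @ zs)"
    using Cons.prems zs' sets by (intro Cons.IH) auto
  show ?case using Rel_trans[OF 1 2[simplified]] zs' by simp
qed

lemma Rel_all: "distinct xs \<Longrightarrow> distinct ys \<Longrightarrow> set xs = set ys \<Longrightarrow> set xs \<subseteq> S \<Longrightarrow> Rel S G q xs ys"
  using Rel_perm[of "[]" ys xs] by simp

end

lemma lin_trans: "linear_order_on S ord \<Longrightarrow> ord_less ord a b \<Longrightarrow> ord_less ord b c \<Longrightarrow> ord_less ord a c"
  unfolding linear_order_on_def partial_order_on_def preorder_on_def ord_less_def antisym_def trans_def
  by blast
lemma lin_asym: "linear_order_on S ord \<Longrightarrow> ord_less ord a b \<Longrightarrow> \<not> ord_less ord b a"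
  unfolding linear_order_on_def partial_order_on_def preorder_on_def ord_less_def antisym_def
  by blast
lemma lin_total: "linear_order_on S ord \<Longrightarrow> a \<in> S \<Longrightarrow> b \<in> S \<Longrightarrow> a \<noteq> b \<Longrightarrow> ord_less ord a b \<or> ord_less ord b a"
  unfolding linear_order_on_def total_on_def ord_less_def by blast

lemma sorted_insert:
  assumes tr: "\<And>a b c. P a b \<Longrightarrow> P b c \<Longrightarrow> P a c"
  shows "sorted_wrt P xs \<Longrightarrow> (\<forall>y\<in>set xs. y \<noteq> x \<longrightarrow> P x y \<or> P y x) \<Longrightarrow>
    \<exists>ys. set ys = insert x (set xs) \<and> sorted_wrt P ys"
proof (induction xs)
  case Nil then show ?case by (intro exI[of _ "[x]"]) simp
next
  case (Cons y xs)
  show ?case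
  proof (cases "x = y")
    case True then show ?thesis using Cons.prems by (intro exI[of _ "y # xs"]) auto
  next
    case False
    then have "P x y \<or> P y x" using Cons.prems by auto
    then show ?thesis
    proof
      assume "P x y"
      then show ?thesis using Cons.prems tr by (intro exI[of _ "x # y # xs"]) auto
    next
      assume yx: "P y x"
      obtain ys where ys: "set ys = insert x (set xs)" "sorted_wrt P ys"
        using Cons by auto
      show ?thesis using ys yx Cons.prems by (intro exI[of _ "y # ys"]) auto
    qed
  qed
qed

lemma sorted_unique:
  assumes asym: "\<And>a b. P a b \<Longrightarrow> \<not> P b a"
  shows "sorted_wrt P xs \<Longrightarrow> sorted_wrt P ys \<Longrightarrow> set xs = set ys \<Longrightarrow> xs = ys"
proof (induction xs arbitrary: ys)
  case Nil then show ?case by simp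
next
  case (Cons x xs)
  then obtain y ys' where ys: "ys = y # ys'" by (cases ys) auto
  have irr: "\<And>a. \<not> P a a" using asym by blast
  have "x = y"
  proof (rule ccontr)
    assume ne: "x \<noteq> y"
    have "y \<in> set xs" using Cons.prems ys ne by auto
    then have "P x y" using Cons.prems by auto
    moreover have "x \<in> set ys'" using Cons.prems ys ne by auto
    then have "P y x" using Cons.prems ys by auto
    ultimately show False using asym by blast
  qed
  moreover have "x \<notin> set xs" using Cons.prems irr by auto
  moreover have "y \<notin> set ys'" using Cons.prems ys irr by auto
  ultimately have "set xs = set ys'" using Cons.prems ys by auto
  then show ?case using Cons ys \<open>x = y\<close> by auto
qed

lemma sorted_distinct: "sorted_wrt P xs \<Longrightarrow> (\<And>a. \<not> P a a) \<Longrightarrow> distinct xs"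
  by (induction xs) auto

lemma ordlist_eq:
  assumes "linear_order_on S ord" "sorted_wrt (ord_less ord) xs"
  shows "ordlist ord (set xs) = xs"
  unfolding ordlist_def
proof (rule the_equality)
  show "set xs = set xs \<and> sorted_wrt (ord_less ord) xs" using assms by simp
next
  fix ys assume "set ys = set xs \<and> sorted_wrt (ord_less ord) ys"
  then show "ys = xs" using sorted_unique[of "ord_less ord" ys xs] lin_asym[OF assms(1)] assms(2)
    by blast
qed

lemma sorted_exists:
  assumes "linear_order_on S ord" "finite J" "J \<subseteq> S"
  shows "\<exists>xs. set xs = J \<and> sorted_wrt (ord_less ord) xs"
  using assms(2,3)
proof (induction J rule: finite_induct)
  case empty then show ?case by (intro exI[of _ "[]"]) simp
next
  case (insert x F)
  then obtain xs where xs: "set xs = F" "sorted_wrt (ord_less ord) xs" by auto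
  have "\<forall>y\<in>set xs. y \<noteq> x \<longrightarrow> ord_less ord x y \<or> ord_less ord y x"
    using insert.prems xs lin_total[OF assms(1)] by auto
  then show ?case using sorted_insert[of "ord_less ord" xs x] lin_trans[OF assms(1)] xs by blast
qed

lemma ordlist_props:
  assumes "linear_order_on S ord" "finite J" "J \<subseteq> S"
  shows "set (ordlist ord J) = J" "sorted_wrt (ord_less ord) (ordlist ord J)" "distinct (ordlist ord J)"
proof -
  obtain xs where xs: "set xs = J" "sorted_wrt (ord_less ord) xs" using sorted_exists[OF assms] by blast
  have "ordlist ord J = xs" using ordlist_eq[OF assms(1) xs(2)] xs(1) by simp
  then show "set (ordlist ord J) = J" "sorted_wrt (ord_less ord) (ordlist ord J)" using xs by auto
  show "distinct (ordlist ord J)" using xs \<open>ordlist ord J = xs\<close>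
    by (metis sorted_distinct ord_less_def)
qed

lemma tau_minus_eq:
  assumes "linear_order_on S ord" "finite J" "J \<subseteq> S"
  shows "tau_minus ord q J = tauL q (ordlist ord J)"
proof -
  define xs where "xs = ordlist ord J"
  note p = ordlist_props[OF assms, folded xs_def]
  have f1: "ordlist ord I = filter (\<lambda>x. x \<in> I) xs" if "I \<subseteq> J" for I
  proof -
    have "ordlist ord (set (filter (\<lambda>x. x \<in> I) xs)) = filter (\<lambda>x. x \<in> I) xs"
      using ordlist_eq[OF assms(1)] p(2) sorted_wrt_filter by blast
    moreover have "set (filter (\<lambda>x. x \<in> I) xs) = I" using p(1) that by auto
    ultimately show ?thesis by simp
  qed
  have f2: "ordlist ord (J - I) = filter (\<lambda>x. x \<notin> I) xs" for I
  proof -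
    have "ordlist ord (set (filter (\<lambda>x. x \<notin> I) xs)) = filter (\<lambda>x. x \<notin> I) xs"
      using ordlist_eq[OF assms(1)] p(2) sorted_wrt_filter by blast
    moreover have "set (filter (\<lambda>x. x \<notin> I) xs) = J - I" using p(1) by auto
    ultimately show ?thesis by simp
  qed
  have e: "ellJ ord J I = inv xs I" if "I \<subseteq> J" for I
    using ell'_inv[OF p(3), of I] f1[OF that]
    by (simp add: ellJ_def ell'_def Let_def xs_def[symmetric])
  show ?thesis unfolding tau_minus_def tauL_def xs_def[symmetric] p(1)
    by (rule sum.cong) (auto simp: e f2 tJ_def cf_def)
qed

lemma Iq_sub:
  assumes "finite S" "M \<subseteq> Pow S" "linear_order_on S ord1" "linear_order_on S ord2"
  shows "Iq S ord1 q M \<subseteq> Iq S ord2 q M"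
proof -
  define G2 where "G2 = Iq_gens S ord2 q M"
  have qg: "ncmono [a,b] + ncmono [b,a] - ncconst (2*q) \<in> G2"
    if "a \<in> S" "b \<in> S" "a \<noteq> b" for a b
  proof -
    have "ord_less ord2 a b \<or> ord_less ord2 b a" using lin_total[OF assms(4) that] .
    then show ?thesis
    proof
      assume "ord_less ord2 a b"
      then have "ncmono [b,a] + ncmono [a,b] - ncconst (2*q) \<in> G2"
        using that unfolding G2_def Iq_gens_def by blast
      then show ?thesis by (simp add: add.commute)
    next
      assume "ord_less ord2 b a"
      then show ?thesis using that unfolding G2_def Iq_gens_def by blast
    qed
  qed
  interpret QG S G2 q using qg by unfold_locales
  have gens: "g \<in> nc_ideal S G2" if gin: "g \<in> Iq_gens S ord1 q M" for g
  proof -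
    consider (a) s where "s \<in> S" "g = ncmono [s, s] - ncconst q"
      | (b) r s where "r \<in> S" "s \<in> S" "ord_less ord1 s r" "g = ncmono [r, s] + ncmono [s, r] - ncconst (2 * q)"
      | (c) J where "J \<in> M" "g = tau_minus ord1 q J"
      using gin unfolding Iq_gens_def by blast
    then show ?thesis
    proof cases
      case a then show ?thesis by (intro nc_ideal.gen) (auto simp: G2_def Iq_gens_def)
    next
      case b
      then have "r \<noteq> s" by (auto simp: ord_less_def)
      then show ?thesis using b qg by (intro nc_ideal.gen) auto
    next
      case c
      then have JS1: "J \<subseteq> S" using assms(2) by auto
      then have JS: "J \<subseteq> S" "finite J" using assms(1) finite_subset by auto
      note p1 = ordlist_props[OF assms(3) JS(2,1)]
      note p2 = ordlist_props[OF assms(4) JS(2,1)]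
      have R: "Rel S G2 q (ordlist ord1 J) (ordlist ord2 J)"
        using p1 p2 JS by (intro Rel_all) auto
      have "tau_minus ord2 q J \<in> G2" using c unfolding G2_def Iq_gens_def by blast
      then have t2: "tauL q (ordlist ord2 J) \<in> nc_ideal S G2"
        using tau_minus_eq[OF assms(4) JS(2,1)] by (metis nc_ideal.gen)
      have "tauL q (ordlist ord1 J) \<in> nc_ideal S G2"
      proof -
        let ?x = "tauL q (ordlist ord1 J)" and ?y = "tauL q (ordlist ord2 J)"
        have "?x = (?x - ?y) + ?y" "?x = (?x + ?y) - ?y" by simp_all
        then show ?thesis using R t2 unfolding Rel_def by (metis nc_ideal.add ideal_diff)
      qed
      then show ?thesis using c tau_minus_eq[OF assms(3) JS(2,1), of q] by simp
    qed
  qed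
  show ?thesis
  proof
    fix f assume "f \<in> Iq S ord1 q M"
    then show "f \<in> Iq S ord2 q M" unfolding Iq_def
    proof (induction rule: nc_ideal.induct)
      case (gen g) then show ?case using gens by (simp add: G2_def)
    next
      case zero then show ?case by (rule nc_ideal.zero)
    next
      case (add f g) then show ?case by (blast intro: nc_ideal.add)
    next
      case (mult_left a f) then show ?case by (blast intro: nc_ideal.mult_left)
    next
      case (mult_right a f) then show ?case by (blast intro: nc_ideal.mult_right)
    qed
  qed
qed

theorem proposition4p1:
  fixes S :: "'s set" and q :: "'r::comm_ring_1" and M :: "'s set set"
    and ord1 ord2 :: "('s \<times> 's) set"
  assumes "finite S"
    and "M \<subseteq> Pow S"
    and "linear_order_on S ord1"
    and "linear_order_on S ord2"
  shows "Iq S ord1 q M = Iq S ord2 q M"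
  using Iq_sub[OF assms] Iq_sub[OF assms(1,2,4,3)] by blast

end
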